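(* For every $n\ge 0$ the Jones–Wenzl projector $\mathrm{j}_n\in\mathrm{End}_{\mathcal{TL}_0(\Bbbk)}(\mathbf n)$ is idempotent: $\mathrm{j}_n\circ\mathrm{j}_n=\mathrm{j}_n$.
   Context: $\Bbbk$ is a field. $\mathcal{TL}_0(\Bbbk)$ is the strict $\Bbbk$-linear monoidal category with objects $\mathbf 0,\mathbf 1,\dots$, $\mathbf m\otimes\mathbf n=\mathbf{m+n}$, generated by $\mathrm{cup}:\mathbf 0\to\mathbf 2$ and $\mathrm{cap}:\mathbf 2\to\mathbf 0$ subject to $(\mathrm{id}_{\mathbf 1}\otimes\mathrm{cap})\circ(\mathrm{cup}\otimes\mathrm{id}_{\mathbf 1})=0=(\mathrm{cap}\otimes\mathrm{id}_{\mathbf 1})\circ(\mathrm{id}_{\mathbf 1}\otimes\mathrm{cup})$ and $\mathrm{cap}\circ\mathrm{cup}=\mathrm{id}_{\mathbf 0}$. A subset $I\subseteq\{1,\dots,n\}$ is apt if $n\notin I$ and $i\in I$ implies $i-1,i+1\notin I$. For apt $I$, $\mathrm{cap}_{I,n}:\mathbf n\to\mathbf{n-2|I|}$ is the diagram with a cap joining strands $i$ and $i+1$ for each $i\in I$ and through-strands elsewhere, and $\mathrm{cup}_{I,n}:\mathbf{n-2|I|}\to\mathbf n$ is its reflection (cups in the same positions). Define $\mathrm{j}_n=\sum_{I\subseteq\{1,\dots,n\}\text{ apt}}(-1)^{|I|}\,\mathrm{cup}_{I,n}\circ\mathrm{cap}_{I,n}$. *)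

theory Defs
  imports Main
begin

text \<open>Formal morphism terms of the free strict monoidal category generated by the
object 1 and the morphisms cup : 0 -> 2, cap : 2 -> 0.
Objects are natural numbers, m tensor n = m + n.\<close>

datatype tm = IdT nat | CupT | CapT | CompT tm tm | TensT tm tm

text \<open>typed f m n : f is a well-formed term f : m -> n.  CompT g f means g after f;
TensT f g puts f to the left of g.\<close>

inductive typed :: "tm \<Rightarrow> nat \<Rightarrow> nat \<Rightarrow> bool" where
  t_id: "typed (IdT n) n n"
| t_cup: "typed CupT 0 2"
| t_cap: "typed CapT 2 0"
| t_comp: "typed f l m \<Longrightarrow> typed g m n \<Longrightarrow> typed (CompT g f) l n"
| t_tens: "typed f a b \<Longrightarrow> typed g c d \<Longrightarrow> typed (TensT f g) (a + c) (b + d)"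

text \<open>Formal k-linear combinations of terms are functions tm => k.\<close>

definition single :: "tm \<Rightarrow> tm \<Rightarrow> 'k::field" where
  "single t = (\<lambda>s. if s = t then 1 else 0)"

definition comp_lc :: "(tm \<Rightarrow> 'k::field) \<Rightarrow> (tm \<Rightarrow> 'k) \<Rightarrow> tm \<Rightarrow> 'k" where
  "comp_lc a b = (\<lambda>t. case t of CompT x y \<Rightarrow> a x * b y | _ \<Rightarrow> 0)"

definition tens_lc :: "(tm \<Rightarrow> 'k::field) \<Rightarrow> (tm \<Rightarrow> 'k) \<Rightarrow> tm \<Rightarrow> 'k" where
  "tens_lc a b = (\<lambda>t. case t of TensT x y \<Rightarrow> a x * b y | _ \<Rightarrow> 0)"

inductive rel_gen :: "nat \<Rightarrow> nat \<Rightarrow> tm \<Rightarrow> tm \<Rightarrow> bool" where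
  r_idl: "typed f m n \<Longrightarrow> rel_gen m n (CompT (IdT n) f) f"
| r_idr: "typed f m n \<Longrightarrow> rel_gen m n (CompT f (IdT m)) f"
| r_assoc: "typed f l m \<Longrightarrow> typed g m n \<Longrightarrow> typed h n p \<Longrightarrow>
     rel_gen l p (CompT h (CompT g f)) (CompT (CompT h g) f)"
| r_tassoc: "typed f a b \<Longrightarrow> typed g c d \<Longrightarrow> typed h e q \<Longrightarrow>
     rel_gen (a + c + e) (b + d + q) (TensT (TensT f g) h) (TensT f (TensT g h))"
| r_unitl: "typed f m n \<Longrightarrow> rel_gen m n (TensT (IdT 0) f) f"
| r_unitr: "typed f m n \<Longrightarrow> rel_gen m n (TensT f (IdT 0)) f"
| r_idtens: "rel_gen (m + n) (m + n) (TensT (IdT m) (IdT n)) (IdT (m + n))"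
| r_interchange: "typed f a b \<Longrightarrow> typed g b c \<Longrightarrow> typed f' a' b' \<Longrightarrow> typed g' b' c' \<Longrightarrow>
     rel_gen (a + a') (c + c') (TensT (CompT g f) (CompT g' f')) (CompT (TensT g g') (TensT f f'))"
| r_loop: "rel_gen 0 0 (CompT CapT CupT) (IdT 0)"

inductive rel_zero :: "nat \<Rightarrow> nat \<Rightarrow> tm \<Rightarrow> bool" where
  z_1: "rel_zero 1 1 (CompT (TensT (IdT 1) CapT) (TensT CupT (IdT 1)))"
| z_2: "rel_zero 1 1 (CompT (TensT CapT (IdT 1)) (TensT (IdT 1) CupT))"

inductive null :: "nat \<Rightarrow> nat \<Rightarrow> (tm \<Rightarrow> 'k::field) \<Rightarrow> bool" where
  n_zero: "null m n (\<lambda>_. 0)"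
| n_add: "null m n a \<Longrightarrow> null m n b \<Longrightarrow> null m n (\<lambda>t. a t + b t)"
| n_smult: "null m n a \<Longrightarrow> null m n (\<lambda>t. c * a t)"
| n_gen: "rel_gen m n s t \<Longrightarrow> null m n (\<lambda>u. single s u - single t u)"
| n_gen0: "rel_zero m n s \<Longrightarrow> null m n (single s)"
| n_compR: "null m n a \<Longrightarrow> typed f l m \<Longrightarrow> null l n (comp_lc a (single f))"
| n_compL: "null m n a \<Longrightarrow> typed g n p \<Longrightarrow> null m p (comp_lc (single g) a)"
| n_tensR: "null m n a \<Longrightarrow> typed f p q \<Longrightarrow> null (m + p) (n + q) (tens_lc a (single f))"
| n_tensL: "null m n a \<Longrightarrow> typed f p q \<Longrightarrow> null (p + m) (q + n) (tens_lc (single f) a)"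

text \<open>Equality of morphisms m -> n in TL_0(k), for linear combinations of terms m -> n.\<close>

definition tl_eq :: "nat \<Rightarrow> nat \<Rightarrow> (tm \<Rightarrow> 'k::field) \<Rightarrow> (tm \<Rightarrow> 'k) \<Rightarrow> bool" where
  "tl_eq m n a b \<longleftrightarrow> null m n (\<lambda>t. a t - b t)"

definition apt :: "nat \<Rightarrow> nat set \<Rightarrow> bool" where
  "apt n I \<longleftrightarrow> I \<subseteq> {1..n} \<and> n \<notin> I \<and> (\<forall>i\<in>I. i - 1 \<notin> I \<and> i + 1 \<notin> I)"

text \<open>capw I i k: the diagram on the k strands at positions i, ..., i+k-1, with a cap
joining strands j and j+1 for j in I and through-strands elsewhere.\<close>

fun capw :: "nat set \<Rightarrow> nat \<Rightarrow> nat \<Rightarrow> tm" where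
  "capw I i 0 = IdT 0"
| "capw I i (Suc 0) = TensT (IdT 1) (IdT 0)"
| "capw I i (Suc (Suc k)) =
     (if i \<in> I then TensT CapT (capw I (i + 2) k)
      else TensT (IdT 1) (capw I (i + 1) (Suc k)))"

fun cupw :: "nat set \<Rightarrow> nat \<Rightarrow> nat \<Rightarrow> tm" where
  "cupw I i 0 = IdT 0"
| "cupw I i (Suc 0) = TensT (IdT 1) (IdT 0)"
| "cupw I i (Suc (Suc k)) =
     (if i \<in> I then TensT CupT (cupw I (i + 2) k)
      else TensT (IdT 1) (cupw I (i + 1) (Suc k)))"

definition cap_I :: "nat set \<Rightarrow> nat \<Rightarrow> tm" where "cap_I I n = capw I 1 n"
definition cup_I :: "nat set \<Rightarrow> nat \<Rightarrow> tm" where "cup_I I n = cupw I 1 n"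

definition jw :: "nat \<Rightarrow> tm \<Rightarrow> 'k::field" where
  "jw n = (\<lambda>t. \<Sum>I\<in>{I. apt n I}. (-1) ^ card I * single (CompT (cup_I I n) (cap_I I n)) t)"

end

theory Submission
  imports Defs "HOL-Library.Function_Algebras"
begin

section \<open>Typing as a computation\<close>

fun ty :: "tm \<Rightarrow> (nat \<times> nat) option" where
  "ty (IdT n) = Some (n, n)"
| "ty CupT = Some (0, 2)"
| "ty CapT = Some (2, 0)"
| "ty (CompT g f) = (case ty f of None \<Rightarrow> None | Some (l, m) \<Rightarrow>
     (case ty g of None \<Rightarrow> None | Some (m', n) \<Rightarrow> if m = m' then Some (l, n) else None))"
| "ty (TensT f g) = (case ty f of None \<Rightarrow> None | Some (a, b) \<Rightarrow>
     (case ty g of None \<Rightarrow> None | Some (c, d) \<Rightarrow> Some (a + c, b + d)))"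

lemma typed_ty: "typed f m n \<longleftrightarrow> ty f = Some (m, n)"
proof
  assume "typed f m n" then show "ty f = Some (m, n)" by induction auto
next
  assume "ty f = Some (m, n)" then show "typed f m n"
  proof (induction f arbitrary: m n)
    case (CompT g f) then show ?case
      by (auto split: option.splits if_splits) (metis typed.t_comp)
  next
    case (TensT f g) then show ?case
      by (auto split: option.splits) (metis typed.t_tens)
  qed (auto intro: typed.intros)
qed

section \<open>Linear combinations\<close>

definition sm :: "'k::field \<Rightarrow> (tm \<Rightarrow> 'k) \<Rightarrow> tm \<Rightarrow> 'k" where
  "sm c a = (\<lambda>t. c * a t)"

definition lc :: "nat \<Rightarrow> nat \<Rightarrow> (tm \<Rightarrow> 'k::field) \<Rightarrow> bool" where
  "lc m n a \<longleftrightarrow> finite {t. a t \<noteq> 0} \<and> (\<forall>t. a t \<noteq> 0 \<longrightarrow> typed t m n)"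

lemma sum_fun_apply': "(sum f S) x = (\<Sum>i\<in>S. f i x)"
  by (induction S rule: infinite_finite_induct) auto

lemma sm_apply[simp]: "sm c a t = c * a t" by (simp add: sm_def)

lemma single_apply: "single s t = (if t = s then 1 else 0)" by (simp add: single_def)

lemma lc_repr:
  assumes "finite S" "{t. (a::tm \<Rightarrow> 'k::field) t \<noteq> 0} \<subseteq> S"
  shows "a = (\<Sum>s\<in>S. sm (a s) (single s))"
proof (rule ext)
  fix t
  have "(\<Sum>s\<in>S. sm (a s) (single s)) t = (\<Sum>s\<in>S. if s = t then a t else 0)"
    unfolding sum_fun_apply' by (rule sum.cong) (auto simp: single_apply)
  also have "\<dots> = a t" using assms by (auto simp: sum.delta)
  finally show "a t = (\<Sum>s\<in>S. sm (a s) (single s)) t" by simp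
qed

lemma lc_induct[consumes 1, case_names zero single add sm]:
  assumes "lc m n a" "P 0" "\<And>s. typed s m n \<Longrightarrow> P (single s)"
    "\<And>x y. P x \<Longrightarrow> P y \<Longrightarrow> P (x + y)" "\<And>c x. P x \<Longrightarrow> P (sm c x)"
  shows "P a"
proof -
  let ?S = "{t. a t \<noteq> 0}"
  have fin: "finite ?S" and ty: "\<And>t. t \<in> ?S \<Longrightarrow> typed t m n" using assms(1) by (auto simp: lc_def)
  have "\<And>T. T \<subseteq> ?S \<Longrightarrow> P (\<Sum>s\<in>T. sm (a s) (single s))"
  proof -
    fix T assume T: "T \<subseteq> ?S"
    have "finite T" using fin T finite_subset by blast
    from this T show "P (\<Sum>s\<in>T. sm (a s) (single s))"
      by (induction T rule: finite_induct) (auto intro: assms ty)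
  qed
  then have "P (\<Sum>s\<in>?S. sm (a s) (single s))" by blast
  moreover have "(\<Sum>s\<in>?S. sm (a s) (single s)) = a" using lc_repr[OF fin, of a] by simp
  ultimately show ?thesis by simp
qed

lemma comp_lc_add1: "comp_lc (a + b) c = comp_lc a c + comp_lc b c"
  by (auto simp: fun_eq_iff comp_lc_def distrib_right split: tm.split)
lemma comp_lc_add2: "comp_lc a (b + c) = comp_lc a b + comp_lc a c"
  by (auto simp: fun_eq_iff comp_lc_def distrib_left split: tm.split)
lemma comp_lc_diff1: "comp_lc (a - b) c = comp_lc a c - comp_lc b c"
  by (auto simp: fun_eq_iff comp_lc_def left_diff_distrib split: tm.split)
lemma comp_lc_diff2: "comp_lc a (b - c) = comp_lc a b - comp_lc a c"
  by (auto simp: fun_eq_iff comp_lc_def right_diff_distrib split: tm.split)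
lemma comp_lc_sm1: "comp_lc (sm x a) b = sm x (comp_lc a b)"
  by (auto simp: fun_eq_iff comp_lc_def split: tm.split)
lemma comp_lc_sm2: "comp_lc a (sm x b) = sm x (comp_lc a b)"
  by (auto simp: fun_eq_iff comp_lc_def split: tm.split)
lemma comp_lc_zero1: "comp_lc 0 b = 0"
  by (auto simp: fun_eq_iff comp_lc_def split: tm.split)
lemma comp_lc_zero2: "comp_lc a 0 = 0"
  by (auto simp: fun_eq_iff comp_lc_def split: tm.split)
lemma comp_single: "comp_lc (single g) (single f) = (single (CompT g f) :: tm \<Rightarrow> 'k::field)"
  by (auto simp: fun_eq_iff comp_lc_def single_def split: tm.split)

lemma tens_lc_add1: "tens_lc (a + b) c = tens_lc a c + tens_lc b c"
  by (auto simp: fun_eq_iff tens_lc_def distrib_right split: tm.split)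
lemma tens_lc_add2: "tens_lc a (b + c) = tens_lc a b + tens_lc a c"
  by (auto simp: fun_eq_iff tens_lc_def distrib_left split: tm.split)
lemma tens_lc_diff1: "tens_lc (a - b) c = tens_lc a c - tens_lc b c"
  by (auto simp: fun_eq_iff tens_lc_def left_diff_distrib split: tm.split)
lemma tens_lc_diff2: "tens_lc a (b - c) = tens_lc a b - tens_lc a c"
  by (auto simp: fun_eq_iff tens_lc_def right_diff_distrib split: tm.split)
lemma tens_lc_sm1: "tens_lc (sm x a) b = sm x (tens_lc a b)"
  by (auto simp: fun_eq_iff tens_lc_def split: tm.split)
lemma tens_lc_sm2: "tens_lc a (sm x b) = sm x (tens_lc a b)"
  by (auto simp: fun_eq_iff tens_lc_def split: tm.split)
lemma tens_lc_zero1: "tens_lc 0 b = 0"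
  by (auto simp: fun_eq_iff tens_lc_def split: tm.split)
lemma tens_lc_zero2: "tens_lc a 0 = 0"
  by (auto simp: fun_eq_iff tens_lc_def split: tm.split)
lemma tens_single: "tens_lc (single g) (single f) = (single (TensT g f) :: tm \<Rightarrow> 'k::field)"
  by (auto simp: fun_eq_iff tens_lc_def single_def split: tm.split)

lemmas lin_simps = comp_lc_add1 comp_lc_add2 comp_lc_diff1 comp_lc_diff2 comp_lc_sm1 comp_lc_sm2
  comp_lc_zero1 comp_lc_zero2 comp_single
  tens_lc_add1 tens_lc_add2 tens_lc_diff1 tens_lc_diff2 tens_lc_sm1 tens_lc_sm2
  tens_lc_zero1 tens_lc_zero2 tens_single

lemma sm_add: "sm c (a + b) = sm c a + sm c b"
  by (simp add: fun_eq_iff distrib_left)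
lemma sm_zero: "sm c 0 = 0"
  by (simp add: fun_eq_iff)

lemma lc_zero: "lc m n 0"
  by (simp add: lc_def)

lemma lc_single: "typed s m n \<Longrightarrow> lc m n (single s)"
  by (simp add: lc_def single_def)

lemma lc_add: "lc m n a \<Longrightarrow> lc m n b \<Longrightarrow> lc m n (a + b)"
  unfolding lc_def
proof (intro conjI allI impI)
  assume h: "finite {t. a t \<noteq> 0} \<and> (\<forall>t. a t \<noteq> 0 \<longrightarrow> typed t m n)"
     "finite {t. b t \<noteq> 0} \<and> (\<forall>t. b t \<noteq> 0 \<longrightarrow> typed t m n)"
  have "{t. (a + b) t \<noteq> 0} \<subseteq> {t. a t \<noteq> 0} \<union> {t. b t \<noteq> 0}" by auto
  then show "finite {t. (a + b) t \<noteq> 0}" using h finite_subset by blast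
  fix t assume "(a + b) t \<noteq> 0" then show "typed t m n" using h by (cases "a t = 0") auto
qed

lemma lc_sm: "lc m n a \<Longrightarrow> lc m n (sm c a)"
  unfolding lc_def
proof (intro conjI allI impI)
  assume h: "finite {t. a t \<noteq> 0} \<and> (\<forall>t. a t \<noteq> 0 \<longrightarrow> typed t m n)"
  have "{t. sm c a t \<noteq> 0} \<subseteq> {t. a t \<noteq> 0}" by auto
  then show "finite {t. sm c a t \<noteq> 0}" using h finite_subset by blast
  fix t assume "sm c a t \<noteq> 0" then show "typed t m n" using h by fastforce
qed

lemma sm_minus1: "a - b = a + sm (-1) b"
  by (simp add: fun_eq_iff)

lemma lc_diff: "lc m n a \<Longrightarrow> lc m n b \<Longrightarrow> lc m n (a - b)"
  by (simp add: sm_minus1 lc_add lc_sm)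

lemma lc_sum: "finite S \<Longrightarrow> (\<And>x. x \<in> S \<Longrightarrow> lc m n (f x)) \<Longrightarrow> lc m n (sum f S)"
  by (induction S rule: finite_induct) (auto intro: lc_zero lc_add)

lemma lc_comp: "lc n p a \<Longrightarrow> lc m n b \<Longrightarrow> lc m p (comp_lc a b)"
proof -
  assume ha: "lc n p a" and hb: "lc m n b"
  show ?thesis using ha
  proof (induction rule: lc_induct)
    case (single s)
    show ?case using hb
    proof (induction rule: lc_induct)
      case (single s')
      then show ?case using \<open>typed s n p\<close> by (simp only: comp_single) (blast intro: lc_single typed.t_comp)
    qed (simp_all only: lin_simps; blast intro: lc_zero lc_add lc_sm)+
  qed (simp_all only: lin_simps; blast intro: lc_zero lc_add lc_sm)+
qed

lemma lc_tens: "lc m n a \<Longrightarrow> lc p q b \<Longrightarrow> M = m + p \<Longrightarrow> N = n + q \<Longrightarrow> lc M N (tens_lc a b)"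
proof -
  assume ha: "lc m n a" and hb: "lc p q b" and MN: "M = m + p" "N = n + q"
  show ?thesis using ha
  proof (induction rule: lc_induct)
    case (single s)
    show ?case using hb
    proof (induction rule: lc_induct)
      case (single s')
      then show ?case using \<open>typed s m n\<close> MN by (simp only: tens_single) (blast intro: lc_single typed.t_tens)
    qed (simp_all only: lin_simps; blast intro: lc_zero lc_add lc_sm)+
  qed (simp_all only: lin_simps; blast intro: lc_zero lc_add lc_sm)+
qed

lemma null_0: "null m n 0"
  using null.n_zero by (simp add: zero_fun_def)

lemma null_add: "null m n a \<Longrightarrow> null m n b \<Longrightarrow> null m n (a + b)"
  using null.n_add by (simp add: plus_fun_def)

lemma null_sm: "null m n a \<Longrightarrow> null m n (sm c a)"
  using null.n_smult by (simp add: sm_def)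

lemma null_diff: "null m n a \<Longrightarrow> null m n b \<Longrightarrow> null m n (a - b)"
  by (simp add: sm_minus1 null_add null_sm)

lemma null_compL: "null m n d \<Longrightarrow> lc n p g \<Longrightarrow> null m p (comp_lc g d)"
proof -
  assume d: "null m n d" and g: "lc n p g"
  show ?thesis using g
    by (induction rule: lc_induct)
      (simp_all only: lin_simps, (rule null_0 null_add null_sm null.n_compL[OF d]; assumption?)+)
qed

lemma null_compR: "null m n d \<Longrightarrow> lc l m f \<Longrightarrow> null l n (comp_lc d f)"
proof -
  assume d: "null m n d" and f: "lc l m f"
  show ?thesis using f
    by (induction rule: lc_induct)
      (simp_all only: lin_simps, (rule null_0 null_add null_sm null.n_compR[OF d]; assumption?)+)
qed

lemma null_tensR: "null m n d \<Longrightarrow> lc p q f \<Longrightarrow> M = m + p \<Longrightarrow> N = n + q \<Longrightarrow> null M N (tens_lc d f)"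
proof -
  assume d: "null m n d" and f: "lc p q f" and MN: "M = m + p" "N = n + q"
  show ?thesis using f unfolding MN
    by (induction rule: lc_induct)
      (simp_all only: lin_simps, (rule null_0 null_add null_sm null.n_tensR[OF d]; assumption?)+)
qed

lemma null_tensL: "null m n d \<Longrightarrow> lc p q f \<Longrightarrow> M = p + m \<Longrightarrow> N = q + n \<Longrightarrow> null M N (tens_lc f d)"
proof -
  assume d: "null m n d" and f: "lc p q f" and MN: "M = p + m" "N = q + n"
  show ?thesis using f unfolding MN
    by (induction rule: lc_induct)
      (simp_all only: lin_simps, (rule null_0 null_add null_sm null.n_tensL[OF d]; assumption?)+)
qed

lemma tl_eq_iff: "tl_eq m n a b \<longleftrightarrow> null m n (a - b)"
  by (simp add: tl_eq_def fun_diff_def)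

lemma eqv_refl: "tl_eq m n a a"
  unfolding tl_eq_iff by (simp add: null_0)

lemma eqv_sym: "tl_eq m n a b \<Longrightarrow> tl_eq m n b a"
proof -
  assume "tl_eq m n a b"
  then have "null m n (sm (-1) (a - b))" unfolding tl_eq_iff by (rule null_sm)
  moreover have "sm (-1) (a - b) = b - a" by (simp add: fun_eq_iff)
  ultimately show ?thesis unfolding tl_eq_iff by simp
qed

lemma eqv_trans[trans]: "tl_eq m n a b \<Longrightarrow> tl_eq m n b c \<Longrightarrow> tl_eq m n a c"
proof -
  assume "tl_eq m n a b" "tl_eq m n b c"
  then have "null m n ((a - b) + (b - c))" unfolding tl_eq_iff by (rule null_add)
  moreover have "(a - b) + (b - c) = a - c" by (simp add: fun_eq_iff)
  ultimately show ?thesis unfolding tl_eq_iff by simp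
qed

lemma eqv_add: "tl_eq m n a a' \<Longrightarrow> tl_eq m n b b' \<Longrightarrow> tl_eq m n (a + b) (a' + b')"
proof -
  assume "tl_eq m n a a'" "tl_eq m n b b'"
  then have "null m n ((a - a') + (b - b'))" unfolding tl_eq_iff by (rule null_add)
  moreover have "(a - a') + (b - b') = (a + b) - (a' + b')" by (simp add: fun_eq_iff)
  ultimately show ?thesis unfolding tl_eq_iff by simp
qed

lemma eqv_diff: "tl_eq m n a a' \<Longrightarrow> tl_eq m n b b' \<Longrightarrow> tl_eq m n (a - b) (a' - b')"
proof -
  assume "tl_eq m n a a'" "tl_eq m n b b'"
  then have "null m n ((a - a') - (b - b'))" unfolding tl_eq_iff by (rule null_diff)
  moreover have "(a - a') - (b - b') = (a - b) - (a' - b')" by (simp add: fun_eq_iff)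
  ultimately show ?thesis unfolding tl_eq_iff by simp
qed

lemma eqv_sm: "tl_eq m n a a' \<Longrightarrow> tl_eq m n (sm c a) (sm c a')"
proof -
  assume "tl_eq m n a a'"
  then have "null m n (sm c (a - a'))" unfolding tl_eq_iff by (rule null_sm)
  moreover have "sm c (a - a') = sm c a - sm c a'" by (simp add: fun_eq_iff right_diff_distrib)
  ultimately show ?thesis unfolding tl_eq_iff by simp
qed

lemma eqv_sum: "finite S \<Longrightarrow> (\<And>x. x \<in> S \<Longrightarrow> tl_eq m n (f x) (g x)) \<Longrightarrow> tl_eq m n (sum f S) (sum g S)"
  by (induction S rule: finite_induct) (auto intro: eqv_refl eqv_add)

lemma eqv_null: "tl_eq m n a b \<Longrightarrow> null m n b \<Longrightarrow> null m n a"
proof -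
  assume "tl_eq m n a b" "null m n b"
  then have "null m n ((a - b) + b)" unfolding tl_eq_iff by (rule null_add)
  moreover have "(a - b) + b = a" by (simp add: fun_eq_iff)
  ultimately show ?thesis by simp
qed

lemma null_eqv0: "null m n a \<Longrightarrow> tl_eq m n a 0"
  unfolding tl_eq_iff by simp

lemma eqv_compL: "tl_eq m n a b \<Longrightarrow> lc n p g \<Longrightarrow> tl_eq m p (comp_lc g a) (comp_lc g b)"
  unfolding tl_eq_iff comp_lc_diff2[symmetric] by (rule null_compL)

lemma eqv_compR: "tl_eq m n a b \<Longrightarrow> lc l m f \<Longrightarrow> tl_eq l n (comp_lc a f) (comp_lc b f)"
  unfolding tl_eq_iff comp_lc_diff1[symmetric] by (rule null_compR)

lemma eqv_tensR: "tl_eq m n a b \<Longrightarrow> lc p q f \<Longrightarrow> M = m + p \<Longrightarrow> N = n + q \<Longrightarrow>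
    tl_eq M N (tens_lc a f) (tens_lc b f)"
  unfolding tl_eq_iff tens_lc_diff1[symmetric] by (rule null_tensR)

lemma eqv_tensL: "tl_eq m n a b \<Longrightarrow> lc p q f \<Longrightarrow> M = p + m \<Longrightarrow> N = q + n \<Longrightarrow>
    tl_eq M N (tens_lc f a) (tens_lc f b)"
  unfolding tl_eq_iff tens_lc_diff2[symmetric] by (rule null_tensL)

lemma eqv_comp2: "tl_eq m n a a' \<Longrightarrow> tl_eq l m b b' \<Longrightarrow> lc m n a \<Longrightarrow> lc l m b' \<Longrightarrow>
    tl_eq l n (comp_lc a b) (comp_lc a' b')"
  by (rule eqv_trans[OF eqv_compL eqv_compR])

lemma eqv_tens2: "tl_eq m n a a' \<Longrightarrow> tl_eq p q b b' \<Longrightarrow> lc m n a \<Longrightarrow> lc p q b' \<Longrightarrow>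
    M = m + p \<Longrightarrow> N = n + q \<Longrightarrow> tl_eq M N (tens_lc a b) (tens_lc a' b')"
  by (rule eqv_trans[OF eqv_tensL eqv_tensR])

lemma lift:
  assumes "lc m n a" "\<And>s. typed s m n \<Longrightarrow> tl_eq p q (F (single s)) (G (single s))"
    "\<And>x y. F (x + y) = F x + F y" "\<And>c x. F (sm c x) = sm c (F x)" "F 0 = 0"
    "\<And>x y. G (x + y) = G x + G y" "\<And>c x. G (sm c x) = sm c (G x)" "G 0 = 0"
  shows "tl_eq p q (F a) (G a)"
  using assms(1)
proof (induction rule: lc_induct)
  case zero then show ?case by (simp only: assms(5,8) eqv_refl)
next
  case (single s) then show ?case by (rule assms(2))
next
  case (add x y) then show ?case by (simp only: assms(3,6)) (rule eqv_add)
next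
  case (sm c x) then show ?case by (simp only: assms(4,7)) (rule eqv_sm)
qed

lemma eqv_gen: "rel_gen m n s t \<Longrightarrow> tl_eq m n (single s) (single t :: tm \<Rightarrow> 'k::field)"
  using null.n_gen[of m n s t] by (simp add: tl_eq_def)

lemma null_gen0: "rel_zero m n s \<Longrightarrow> null m n (single s :: tm \<Rightarrow> 'k::field)"
  using null.n_gen0 .

declare typed_ty[simp]

lemma g_idl: "typed f m n \<Longrightarrow> tl_eq m n (single (CompT (IdT n) f)) (single f :: tm \<Rightarrow> 'k::field)"
  by (rule eqv_gen) (rule r_idl)
lemma g_idr: "typed f m n \<Longrightarrow> tl_eq m n (single (CompT f (IdT m))) (single f :: tm \<Rightarrow> 'k::field)"
  by (rule eqv_gen) (rule r_idr)
lemma g_assoc: "typed f l m \<Longrightarrow> typed g m n \<Longrightarrow> typed h n p \<Longrightarrow>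
   tl_eq l p (single (CompT h (CompT g f))) (single (CompT (CompT h g) f) :: tm \<Rightarrow> 'k::field)"
  by (rule eqv_gen) (rule r_assoc)
lemma g_tassoc: "typed f a b \<Longrightarrow> typed g c d \<Longrightarrow> typed h e q \<Longrightarrow> M = a + c + e \<Longrightarrow> N = b + d + q \<Longrightarrow>
   tl_eq M N (single (TensT (TensT f g) h)) (single (TensT f (TensT g h)) :: tm \<Rightarrow> 'k::field)"
  by (simp only:) (rule eqv_gen, rule r_tassoc)
lemma g_idtens: "M = m + n \<Longrightarrow> tl_eq M M (single (TensT (IdT m) (IdT n))) (single (IdT M) :: tm \<Rightarrow> 'k::field)"
  by (simp only:) (rule eqv_gen, rule r_idtens)
lemma g_inter: "typed f a b \<Longrightarrow> typed g b c \<Longrightarrow> typed f' a' b' \<Longrightarrow> typed g' b' c' \<Longrightarrow>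
   M = a + a' \<Longrightarrow> N = c + c' \<Longrightarrow>
   tl_eq M N (single (TensT (CompT g f) (CompT g' f'))) (single (CompT (TensT g g') (TensT f f')) :: tm \<Rightarrow> 'k::field)"
  by (simp only:) (rule eqv_gen, rule r_interchange)
lemma g_loop: "tl_eq 0 0 (single (CompT CapT CupT)) (single (IdT 0) :: tm \<Rightarrow> 'k::field)"
  by (rule eqv_gen) (rule r_loop)
lemma g_unitr: "typed f m n \<Longrightarrow> tl_eq m n (single (TensT f (IdT 0))) (single f :: tm \<Rightarrow> 'k::field)"
  by (rule eqv_gen) (rule r_unitr)

lemma t_compL: "tl_eq m n (single s) (single t :: tm \<Rightarrow> 'k::field) \<Longrightarrow> typed g n p \<Longrightarrow>
   tl_eq m p (single (CompT g s)) (single (CompT g t) :: tm \<Rightarrow> 'k::field)"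
  by (metis eqv_compL lc_single comp_single)
lemma t_compR: "tl_eq m n (single s) (single t :: tm \<Rightarrow> 'k::field) \<Longrightarrow> typed f l m \<Longrightarrow>
   tl_eq l n (single (CompT s f)) (single (CompT t f) :: tm \<Rightarrow> 'k::field)"
  by (metis eqv_compR lc_single comp_single)
lemma t_tensL: "tl_eq m n (single s) (single t :: tm \<Rightarrow> 'k::field) \<Longrightarrow> typed f p q \<Longrightarrow>
   M = p + m \<Longrightarrow> N = q + n \<Longrightarrow>
   tl_eq M N (single (TensT f s)) (single (TensT f t) :: tm \<Rightarrow> 'k::field)"
  by (metis eqv_tensL lc_single tens_single)
lemma t_tensR: "tl_eq m n (single s) (single t :: tm \<Rightarrow> 'k::field) \<Longrightarrow> typed f p q \<Longrightarrow>
   M = m + p \<Longrightarrow> N = n + q \<Longrightarrow>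
   tl_eq M N (single (TensT s f)) (single (TensT t f) :: tm \<Rightarrow> 'k::field)"
  by (metis eqv_tensR lc_single tens_single)

lemma z_compL: "null m n (single s :: tm \<Rightarrow> 'k::field) \<Longrightarrow> typed g n p \<Longrightarrow> null m p (single (CompT g s) :: tm \<Rightarrow> 'k)"
  by (metis null.n_compL comp_single)
lemma z_compR: "null m n (single s :: tm \<Rightarrow> 'k::field) \<Longrightarrow> typed f l m \<Longrightarrow> null l n (single (CompT s f) :: tm \<Rightarrow> 'k)"
  by (metis null.n_compR comp_single)
lemma z_tensR: "null m n (single s :: tm \<Rightarrow> 'k::field) \<Longrightarrow> typed f p q \<Longrightarrow> M = m + p \<Longrightarrow> N = n + q \<Longrightarrow>
   null M N (single (TensT s f) :: tm \<Rightarrow> 'k)"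
  by (metis null.n_tensR tens_single)

lemma t_comp2: "tl_eq m n (single s) (single s' :: tm \<Rightarrow> 'k::field) \<Longrightarrow>
   tl_eq l m (single t) (single t' :: tm \<Rightarrow> 'k) \<Longrightarrow> typed s m n \<Longrightarrow> typed t' l m \<Longrightarrow>
   tl_eq l n (single (CompT s t)) (single (CompT s' t') :: tm \<Rightarrow> 'k)"
  by (rule eqv_trans[OF t_compL t_compR])

lemma t_tens2: "tl_eq m n (single s) (single s' :: tm \<Rightarrow> 'k::field) \<Longrightarrow>
   tl_eq p q (single t) (single t' :: tm \<Rightarrow> 'k) \<Longrightarrow> typed s m n \<Longrightarrow> typed t' p q \<Longrightarrow>
   M = m + p \<Longrightarrow> N = n + q \<Longrightarrow>
   tl_eq M N (single (TensT s t)) (single (TensT s' t') :: tm \<Rightarrow> 'k)"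
  by (rule eqv_trans[OF t_tensL t_tensR])


lemma e_split: "tl_eq 3 3 (single (TensT (IdT 1) (CompT CupT CapT)))
   (single (CompT (TensT (IdT 1) CupT) (TensT (IdT 1) CapT)) :: tm \<Rightarrow> 'k::field)"
proof -
  have "tl_eq 3 3 (single (TensT (IdT 1) (CompT CupT CapT)))
      (single (TensT (CompT (IdT 1) (IdT 1)) (CompT CupT CapT)) :: tm \<Rightarrow> 'k::field)"
    by (rule t_tensR, rule eqv_sym, rule g_idl) auto
  also have "tl_eq 3 3 \<dots> (single (CompT (TensT (IdT 1) CupT) (TensT (IdT 1) CapT)))"
    by (rule g_inter) auto
  finally show ?thesis .
qed

lemma e_split': "tl_eq 3 3 (single (TensT (CompT CupT CapT) (IdT 1)))
   (single (CompT (TensT CupT (IdT 1)) (TensT CapT (IdT 1))) :: tm \<Rightarrow> 'k::field)"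
proof -
  have "tl_eq 3 3 (single (TensT (CompT CupT CapT) (IdT 1)))
      (single (TensT (CompT CupT CapT) (CompT (IdT 1) (IdT 1))) :: tm \<Rightarrow> 'k::field)"
    by (rule t_tensL, rule eqv_sym, rule g_idl) auto
  also have "tl_eq 3 3 \<dots> (single (CompT (TensT CupT (IdT 1)) (TensT CapT (IdT 1))))"
    by (rule g_inter) auto
  finally show ?thesis .
qed

lemma zz1:
  assumes A: "typed A a a'" and B: "typed B b (Suc a)"
  shows "null (2 + b) (3 + a') (single (CompT (TensT (IdT 1) (TensT (CompT CupT CapT) A))
            (TensT (CompT CupT CapT) B)) :: tm \<Rightarrow> 'k::field)"
proof -
  have tA: "ty A = Some (a, a')" and tB: "ty B = Some (b, Suc a)" using A B by auto
  define e where "e = CompT CupT CapT"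
  define T2 where "T2 = TensT (TensT (IdT 1) CupT) A"
  define T1 where "T1 = TensT (TensT (IdT 1) CapT) (IdT a)"
  define B1 where "B1 = TensT (TensT CupT (IdT 1)) (IdT a)"
  define B0 where "B0 = TensT CapT B"
  have top: "tl_eq (3 + a) (3 + a') (single (TensT (IdT 1) (TensT e A))) (single (CompT T2 T1) :: tm \<Rightarrow> 'k)"
  proof -
    have "tl_eq (3 + a) (3 + a') (single (TensT (IdT 1) (TensT e A))) (single (TensT (TensT (IdT 1) e) A) :: tm \<Rightarrow> 'k)"
      by (rule eqv_sym, rule g_tassoc) (auto simp add: tA e_def)
    also have "tl_eq (3 + a) (3 + a') \<dots>
        (single (TensT (CompT (TensT (IdT 1) CupT) (TensT (IdT 1) CapT)) (CompT A (IdT a))))"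
      by (rule t_tens2, unfold e_def, rule e_split, rule eqv_sym, rule g_idr) (auto simp add: tA)
    also have "tl_eq (3 + a) (3 + a') \<dots> (single (CompT T2 T1))"
      unfolding T2_def T1_def by (rule g_inter) (auto simp add: tA)
    finally show ?thesis .
  qed
  have bot: "tl_eq (2 + b) (3 + a) (single (TensT e B)) (single (CompT B1 B0) :: tm \<Rightarrow> 'k)"
  proof -
    have "tl_eq (2 + b) (3 + a) (single (TensT e B)) (single (TensT e (CompT (IdT (Suc a)) B)) :: tm \<Rightarrow> 'k)"
      by (rule t_tensL, rule eqv_sym, rule g_idl) (auto simp add: tB e_def)
    also have "tl_eq (2 + b) (3 + a) \<dots> (single (CompT (TensT CupT (IdT (Suc a))) B0))"
      unfolding e_def B0_def by (rule g_inter[where a=2 and b=0 and c=2 and a'=b and b'="Suc a" and c'="Suc a"]) (auto simp add: tB)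
    also have "tl_eq (2 + b) (3 + a) \<dots> (single (CompT B1 B0))"
    proof (rule t_compR)
      have "tl_eq (Suc a + 0) (Suc a + 2) (single (TensT CupT (IdT (Suc a))))
          (single (TensT CupT (TensT (IdT 1) (IdT a))) :: tm \<Rightarrow> 'k)"
        by (rule t_tensL, rule eqv_sym, rule g_idtens) auto
      also have "tl_eq (Suc a + 0) (Suc a + 2) \<dots> (single B1)"
        unfolding B1_def by (rule eqv_sym, rule g_tassoc) auto
      finally show "tl_eq (Suc a) (3 + a) (single (TensT CupT (IdT (Suc a)))) (single B1 :: tm \<Rightarrow> 'k)"
        by (simp add: eval_nat_numeral)
    qed (simp add: B0_def tB)
    finally show ?thesis .
  qed
  have "tl_eq (2 + b) (3 + a') (single (CompT (TensT (IdT 1) (TensT e A)) (TensT e B)))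
      (single (CompT (CompT T2 T1) (CompT B1 B0)) :: tm \<Rightarrow> 'k)"
    by (rule t_comp2[OF top bot]) (auto simp add: tA tB e_def B1_def B0_def)
  also have "tl_eq (2 + b) (3 + a') \<dots> (single (CompT T2 (CompT T1 (CompT B1 B0))))"
    by (rule eqv_sym, rule g_assoc) (auto simp add: tA tB T1_def T2_def B1_def B0_def)
  also have "tl_eq (2 + b) (3 + a') \<dots> (single (CompT T2 (CompT (CompT T1 B1) B0)))"
    by (rule t_compL, rule g_assoc) (auto simp add: tA tB T1_def T2_def B1_def B0_def)
  finally have ch: "tl_eq (2 + b) (3 + a') (single (CompT (TensT (IdT 1) (TensT e A)) (TensT e B)))
      (single (CompT T2 (CompT (CompT T1 B1) B0)) :: tm \<Rightarrow> 'k)" .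
  have "tl_eq (1 + a) (1 + a) (single (CompT T1 B1))
     (single (TensT (CompT (TensT (IdT 1) CapT) (TensT CupT (IdT 1))) (CompT (IdT a) (IdT a))) :: tm \<Rightarrow> 'k)"
    unfolding T1_def B1_def by (rule eqv_sym, rule g_inter) auto
  moreover have "null (1 + a) (1 + a)
     (single (TensT (CompT (TensT (IdT 1) CapT) (TensT CupT (IdT 1))) (CompT (IdT a) (IdT a))) :: tm \<Rightarrow> 'k)"
    by (rule z_tensR, rule null_gen0, rule z_1) auto
  ultimately have "null (1 + a) (1 + a) (single (CompT T1 B1) :: tm \<Rightarrow> 'k)" by (rule eqv_null)
  then have "null (2 + b) (3 + a') (single (CompT T2 (CompT (CompT T1 B1) B0)) :: tm \<Rightarrow> 'k)"
    by (rule z_compL[OF z_compR]) (auto simp add: tA tB T2_def B0_def)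
  with ch show ?thesis unfolding e_def by (rule eqv_null)
qed

lemma zz2:
  assumes A: "typed A p p'" and B: "typed B (Suc p') q"
  shows "null (3 + p) (2 + q) (single (CompT (TensT (CompT CupT CapT) B)
            (TensT (IdT 1) (TensT (CompT CupT CapT) A))) :: tm \<Rightarrow> 'k::field)"
proof -
  have tA: "ty A = Some (p, p')" and tB: "ty B = Some (Suc p', q)" using A B by auto
  define e where "e = CompT CupT CapT"
  define T2 where "T2 = TensT CupT B"
  define T1 where "T1 = TensT (TensT CapT (IdT 1)) (IdT p')"
  define B1 where "B1 = TensT (TensT (IdT 1) CupT) (IdT p')"
  define B0 where "B0 = TensT (TensT (IdT 1) CapT) A"
  have top: "tl_eq (3 + p') (2 + q) (single (TensT e B)) (single (CompT T2 T1) :: tm \<Rightarrow> 'k)"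
  proof -
    have "tl_eq (3 + p') (2 + q) (single (TensT e B)) (single (TensT e (CompT B (IdT (Suc p')))) :: tm \<Rightarrow> 'k)"
      by (rule t_tensL, rule eqv_sym, rule g_idr) (auto simp add: tB e_def)
    also have "tl_eq (3 + p') (2 + q) \<dots> (single (CompT T2 (TensT CapT (IdT (Suc p')))))"
      unfolding e_def T2_def
      by (rule g_inter[where a=2 and b=0 and c=2 and a'="Suc p'" and b'="Suc p'" and c'=q]) (auto simp add: tB)
    also have "tl_eq (3 + p') (2 + q) \<dots> (single (CompT T2 T1))"
    proof (rule t_compL)
      have "tl_eq (2 + Suc p') (0 + Suc p') (single (TensT CapT (IdT (Suc p'))))
          (single (TensT CapT (TensT (IdT 1) (IdT p'))) :: tm \<Rightarrow> 'k)"
        by (rule t_tensL, rule eqv_sym, rule g_idtens) auto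
      also have "tl_eq (2 + Suc p') (0 + Suc p') \<dots> (single T1)"
        unfolding T1_def by (rule eqv_sym, rule g_tassoc) auto
      finally show "tl_eq (3 + p') (Suc p') (single (TensT CapT (IdT (Suc p')))) (single T1 :: tm \<Rightarrow> 'k)"
        by (simp add: eval_nat_numeral)
    qed (simp add: T2_def tB)
    finally show ?thesis .
  qed
  have bot: "tl_eq (3 + p) (3 + p') (single (TensT (IdT 1) (TensT e A))) (single (CompT B1 B0) :: tm \<Rightarrow> 'k)"
  proof -
    have "tl_eq (3 + p) (3 + p') (single (TensT (IdT 1) (TensT e A))) (single (TensT (TensT (IdT 1) e) A) :: tm \<Rightarrow> 'k)"
      by (rule eqv_sym, rule g_tassoc) (auto simp add: tA e_def)
    also have "tl_eq (3 + p) (3 + p') \<dots>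
        (single (TensT (CompT (TensT (IdT 1) CupT) (TensT (IdT 1) CapT)) (CompT (IdT p') A)))"
      by (rule t_tens2, unfold e_def, rule e_split, rule eqv_sym, rule g_idl) (auto simp add: tA)
    also have "tl_eq (3 + p) (3 + p') \<dots> (single (CompT B1 B0))"
      unfolding B1_def B0_def by (rule g_inter[where a=3 and b=1 and c=3 and a'=p and b'=p' and c'=p']) (auto simp add: tA)
    finally show ?thesis .
  qed
  have "tl_eq (3 + p) (2 + q) (single (CompT (TensT e B) (TensT (IdT 1) (TensT e A))))
      (single (CompT (CompT T2 T1) (CompT B1 B0)) :: tm \<Rightarrow> 'k)"
    by (rule t_comp2[OF top bot]) (auto simp add: tA tB e_def B1_def B0_def)
  also have "tl_eq (3 + p) (2 + q) \<dots> (single (CompT T2 (CompT T1 (CompT B1 B0))))"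
    by (rule eqv_sym, rule g_assoc) (auto simp add: tA tB T1_def T2_def B1_def B0_def)
  also have "tl_eq (3 + p) (2 + q) \<dots> (single (CompT T2 (CompT (CompT T1 B1) B0)))"
    by (rule t_compL, rule g_assoc) (auto simp add: tA tB T1_def T2_def B1_def B0_def)
  finally have ch: "tl_eq (3 + p) (2 + q) (single (CompT (TensT e B) (TensT (IdT 1) (TensT e A))))
      (single (CompT T2 (CompT (CompT T1 B1) B0)) :: tm \<Rightarrow> 'k)" .
  have "tl_eq (1 + p') (1 + p') (single (CompT T1 B1))
     (single (TensT (CompT (TensT CapT (IdT 1)) (TensT (IdT 1) CupT)) (CompT (IdT p') (IdT p'))) :: tm \<Rightarrow> 'k)"
    unfolding T1_def B1_def by (rule eqv_sym, rule g_inter) auto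
  moreover have "null (1 + p') (1 + p')
     (single (TensT (CompT (TensT CapT (IdT 1)) (TensT (IdT 1) CupT)) (CompT (IdT p') (IdT p'))) :: tm \<Rightarrow> 'k)"
    by (rule z_tensR, rule null_gen0, rule z_2) auto
  ultimately have "null (1 + p') (1 + p') (single (CompT T1 B1) :: tm \<Rightarrow> 'k)" by (rule eqv_null)
  then have "null (3 + p) (2 + q) (single (CompT T2 (CompT (CompT T1 B1) B0)) :: tm \<Rightarrow> 'k)"
    by (rule z_compL[OF z_compR]) (auto simp add: tA tB T2_def B0_def)
  with ch show ?thesis unfolding e_def by (rule eqv_null)
qed

section \<open>The projectors on windows\<close>

fun cnt :: "nat set \<Rightarrow> nat \<Rightarrow> nat \<Rightarrow> nat" where
  "cnt I i 0 = 0"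
| "cnt I i (Suc 0) = 1"
| "cnt I i (Suc (Suc k)) = (if i \<in> I then cnt I (i + 2) k else Suc (cnt I (i + 1) (Suc k)))"

lemma ty_capw: "ty (capw I i k) = Some (k, cnt I i k) \<and> ty (cupw I i k) = Some (cnt I i k, k)"
  by (induction I i k rule: capw.induct) auto

lemma capw_local: "(\<And>x. x \<ge> i \<Longrightarrow> x \<in> I \<longleftrightarrow> x \<in> I') \<Longrightarrow> capw I i k = capw I' i k"
  by (induction I i k rule: capw.induct) auto

lemma cupw_local: "(\<And>x. x \<ge> i \<Longrightarrow> x \<in> I \<longleftrightarrow> x \<in> I') \<Longrightarrow> cupw I i k = cupw I' i k"
  by (induction I i k rule: cupw.induct) auto

definition adm :: "nat \<Rightarrow> nat \<Rightarrow> nat set set" where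
  "adm i k = {I. I \<subseteq> {i..<i + k - 1} \<and> (\<forall>j\<in>I. Suc j \<notin> I)}"

lemma finite_adm: "finite (adm i k)"
proof -
  have "adm i k \<subseteq> Pow {i..<i + k - 1}" by (auto simp: adm_def)
  then show ?thesis by (rule finite_subset) simp
qed

lemma adm_0: "adm i 0 = {{}}" by (auto simp: adm_def)
lemma adm_1: "adm i (Suc 0) = {{}}" by (auto simp: adm_def)

lemma adm_SS: "adm i (Suc (Suc k)) = adm (Suc i) (Suc k) \<union> insert i ` adm (Suc (Suc i)) k"
proof (rule set_eqI, rule iffI)
  fix I assume "I \<in> adm i (Suc (Suc k))"
  then have I: "I \<subseteq> {i..<i + Suc k}" "\<forall>j\<in>I. Suc j \<notin> I" by (auto simp: adm_def)
  show "I \<in> adm (Suc i) (Suc k) \<union> insert i ` adm (Suc (Suc i)) k"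
  proof (cases "i \<in> I")
    case True
    then have "Suc i \<notin> I" using I by blast
    have "I - {i} \<subseteq> {Suc (Suc i)..<Suc (Suc i) + k - 1}"
    proof
      fix x assume x: "x \<in> I - {i}"
      then have "i \<le> x" "x < i + Suc k" "x \<noteq> i" "x \<noteq> Suc i" using I \<open>Suc i \<notin> I\<close> by auto
      then show "x \<in> {Suc (Suc i)..<Suc (Suc i) + k - 1}" by auto
    qed
    then have "I - {i} \<in> adm (Suc (Suc i)) k" using I by (auto simp: adm_def)
    moreover have "I = insert i (I - {i})" using True by auto
    ultimately show ?thesis by blast
  next
    case False
    have "I \<subseteq> {Suc i..<Suc i + Suc k - 1}"
    proof
      fix x assume x: "x \<in> I"
      then have "i \<le> x" "x < i + Suc k" "x \<noteq> i" using I False by auto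
      then show "x \<in> {Suc i..<Suc i + Suc k - 1}" by auto
    qed
    then have "I \<in> adm (Suc i) (Suc k)" using I by (auto simp: adm_def)
    then show ?thesis by blast
  qed
next
  fix I assume "I \<in> adm (Suc i) (Suc k) \<union> insert i ` adm (Suc (Suc i)) k"
  then show "I \<in> adm i (Suc (Suc k))"
    by (auto simp: adm_def subset_iff)
qed

definition Q :: "nat \<Rightarrow> nat \<Rightarrow> tm \<Rightarrow> 'k::field" where
  "Q i k = (\<Sum>I\<in>adm i k. sm ((-1) ^ card I) (single (CompT (cupw I i k) (capw I i k))))"

lemma lc_Q: "lc k k (Q i k)"
  unfolding Q_def
  by (rule lc_sum[OF finite_adm], rule lc_sm, rule lc_single) (simp add: ty_capw)

lemma Q_0: "Q i 0 = single (CompT (IdT 0) (IdT 0))"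
  by (simp add: Q_def adm_0 fun_eq_iff)

lemma Q_1: "Q i (Suc 0) = single (CompT (TensT (IdT 1) (IdT 0)) (TensT (IdT 1) (IdT 0)))"
  by (simp add: Q_def adm_1 fun_eq_iff)

lemma Q_SS: "Q i (Suc (Suc k)) =
   (\<Sum>I\<in>adm (Suc i) (Suc k). sm ((-1) ^ card I)
       (single (CompT (TensT (IdT 1) (cupw I (Suc i) (Suc k))) (TensT (IdT 1) (capw I (Suc i) (Suc k))))))
 + (\<Sum>J\<in>adm (Suc (Suc i)) k. sm (- ((-1) ^ card J))
       (single (CompT (TensT CupT (cupw J (Suc (Suc i)) k)) (TensT CapT (capw J (Suc (Suc i)) k)))))"
proof -
  let ?F = "\<lambda>I. sm ((-1) ^ card I) (single (CompT (cupw I i (Suc (Suc k))) (capw I i (Suc (Suc k)))) :: tm \<Rightarrow> 'a)"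
  have d: "adm (Suc i) (Suc k) \<inter> insert i ` adm (Suc (Suc i)) k = {}"
    by (auto simp: adm_def)
  have inj: "inj_on (insert i) (adm (Suc (Suc i)) k)"
  proof (rule inj_onI)
    fix x y assume "x \<in> adm (Suc (Suc i)) k" "y \<in> adm (Suc (Suc i)) k" "insert i x = insert i y"
    moreover then have "i \<notin> x" "i \<notin> y" by (auto simp: adm_def)
    ultimately show "x = y" by (metis Diff_insert_absorb)
  qed
  have "Q i (Suc (Suc k)) = sum ?F (adm (Suc i) (Suc k)) + sum ?F (insert i ` adm (Suc (Suc i)) k)"
    unfolding Q_def adm_SS by (rule sum.union_disjoint[OF finite_adm finite_imageI[OF finite_adm] d])
  also have "sum ?F (insert i ` adm (Suc (Suc i)) k) = sum (?F \<circ> insert i) (adm (Suc (Suc i)) k)"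
    by (rule sum.reindex[OF inj])
  also have "sum ?F (adm (Suc i) (Suc k)) = (\<Sum>I\<in>adm (Suc i) (Suc k). sm ((-1) ^ card I)
       (single (CompT (TensT (IdT 1) (cupw I (Suc i) (Suc k))) (TensT (IdT 1) (capw I (Suc i) (Suc k))))))"
  proof (rule sum.cong[OF refl])
    fix I assume "I \<in> adm (Suc i) (Suc k)"
    then have "i \<notin> I" by (auto simp: adm_def)
    then show "?F I = sm ((-1) ^ card I)
       (single (CompT (TensT (IdT 1) (cupw I (Suc i) (Suc k))) (TensT (IdT 1) (capw I (Suc i) (Suc k)))))"
      by simp
  qed
  also have "sum (?F \<circ> insert i) (adm (Suc (Suc i)) k) = (\<Sum>J\<in>adm (Suc (Suc i)) k. sm (- ((-1) ^ card J))
       (single (CompT (TensT CupT (cupw J (Suc (Suc i)) k)) (TensT CapT (capw J (Suc (Suc i)) k)))))"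
  proof (rule sum.cong[OF refl])
    fix J assume J: "J \<in> adm (Suc (Suc i)) k"
    then have iJ: "i \<notin> J" and fJ: "finite J" by (auto simp: adm_def intro: finite_subset)
    have l1: "capw (insert i J) (Suc (Suc i)) k = capw J (Suc (Suc i)) k"
      by (rule capw_local) auto
    have l2: "cupw (insert i J) (Suc (Suc i)) k = cupw J (Suc (Suc i)) k"
      by (rule cupw_local) auto
    show "(?F \<circ> insert i) J = sm (- ((-1) ^ card J))
       (single (CompT (TensT CupT (cupw J (Suc (Suc i)) k)) (TensT CapT (capw J (Suc (Suc i)) k))))"
      using iJ fJ l1 l2 by (simp add: numeral_2_eq_2)
  qed
  finally show ?thesis .
qed

lemma tens_lc_sum2: "tens_lc a (sum f S) = (\<Sum>x\<in>S. tens_lc a (f x))"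
proof (induction S rule: infinite_finite_induct)
  case (infinite A) then show ?case by (simp only: sum.infinite[OF infinite] tens_lc_zero2)
next
  case empty then show ?case by (simp only: sum.empty tens_lc_zero2)
next
  case (insert x F) then show ?case by (simp only: sum.insert[OF insert(1,2)] tens_lc_add2)
qed

lemma tq1: "typed C k c \<Longrightarrow> typed U c k \<Longrightarrow>
  tl_eq (Suc k) (Suc k) (single (CompT (TensT (IdT 1) U) (TensT (IdT 1) C)))
     (single (TensT (IdT 1) (CompT U C)) :: tm \<Rightarrow> 'k::field)"
proof -
  assume C: "typed C k c" and U: "typed U c k"
  have "tl_eq (Suc k) (Suc k) (single (CompT (TensT (IdT 1) U) (TensT (IdT 1) C)))
     (single (TensT (CompT (IdT 1) (IdT 1)) (CompT U C)) :: tm \<Rightarrow> 'k::field)"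
    by (rule eqv_sym, rule g_inter[where a=1 and b=1 and c=1 and a'=k and b'=c and c'=k]) (use C U in auto)
  also have "tl_eq (Suc k) (Suc k) \<dots> (single (TensT (IdT 1) (CompT U C)))"
    by (rule t_tensR, rule g_idl) (use C U in auto)
  finally show ?thesis .
qed

lemma tq2: "typed C k c \<Longrightarrow> typed U c k \<Longrightarrow>
  tl_eq (Suc (Suc k)) (Suc (Suc k)) (single (CompT (TensT CupT U) (TensT CapT C)))
     (single (TensT (CompT CupT CapT) (CompT U C)) :: tm \<Rightarrow> 'k::field)"
  by (rule eqv_sym, rule g_inter[where a=2 and b=0 and c=2 and a'=k and b'=c and c'=k]) auto

abbreviation O1 :: "tm \<Rightarrow> 'k::field" where "O1 \<equiv> single (IdT 1)"
abbreviation E :: "tm \<Rightarrow> 'k::field" where "E \<equiv> single (CompT CupT CapT)"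
abbreviation I2 :: "tm \<Rightarrow> 'k::field" where "I2 \<equiv> single (IdT 2)"
abbreviation Z :: "tm \<Rightarrow> 'k::field" where "Z \<equiv> single (IdT 0)"

lemma Q_rec: "tl_eq (Suc (Suc k)) (Suc (Suc k)) (Q i (Suc (Suc k)))
   (tens_lc O1 (Q (Suc i) (Suc k)) - tens_lc E (Q (Suc (Suc i)) k) :: tm \<Rightarrow> 'k::field)"
proof -
  let ?A = "adm (Suc i) (Suc k)" and ?B = "adm (Suc (Suc i)) k"
  have e1: "tens_lc O1 (Q (Suc i) (Suc k)) = (\<Sum>I\<in>?A. sm ((-1) ^ card I)
      (single (TensT (IdT 1) (CompT (cupw I (Suc i) (Suc k)) (capw I (Suc i) (Suc k))))) :: tm \<Rightarrow> 'k)"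
    unfolding Q_def tens_lc_sum2 tens_lc_sm2 tens_single ..
  have e2: "tens_lc E (Q (Suc (Suc i)) k) = (\<Sum>J\<in>?B. sm ((-1) ^ card J)
      (single (TensT (CompT CupT CapT) (CompT (cupw J (Suc (Suc i)) k) (capw J (Suc (Suc i)) k)))) :: tm \<Rightarrow> 'k)"
    unfolding Q_def tens_lc_sum2 tens_lc_sm2 tens_single ..
  have s1: "tl_eq (Suc (Suc k)) (Suc (Suc k)) (\<Sum>I\<in>?A. sm ((-1) ^ card I)
       (single (CompT (TensT (IdT 1) (cupw I (Suc i) (Suc k))) (TensT (IdT 1) (capw I (Suc i) (Suc k))))))
     (tens_lc O1 (Q (Suc i) (Suc k)) :: tm \<Rightarrow> 'k)"
    unfolding e1
    by (rule eqv_sum[OF finite_adm], rule eqv_sm, rule tq1) (simp_all add: ty_capw)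
  have s2: "tl_eq (Suc (Suc k)) (Suc (Suc k)) (\<Sum>J\<in>?B. sm (- ((-1) ^ card J))
       (single (CompT (TensT CupT (cupw J (Suc (Suc i)) k)) (TensT CapT (capw J (Suc (Suc i)) k)))))
     (\<Sum>J\<in>?B. sm (- ((-1) ^ card J))
      (single (TensT (CompT CupT CapT) (CompT (cupw J (Suc (Suc i)) k) (capw J (Suc (Suc i)) k)))) :: tm \<Rightarrow> 'k)"
    by (rule eqv_sum[OF finite_adm], rule eqv_sm, rule tq2) (simp_all add: ty_capw)
  have neg: "(\<Sum>J\<in>?B. sm (- ((-1) ^ card J))
      (single (TensT (CompT CupT CapT) (CompT (cupw J (Suc (Suc i)) k) (capw J (Suc (Suc i)) k)))))
     = - tens_lc E (Q (Suc (Suc i)) k :: tm \<Rightarrow> 'k)"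
    unfolding e2 by (simp add: fun_eq_iff sum_fun_apply' sum_negf)
  have "tl_eq (Suc (Suc k)) (Suc (Suc k)) (Q i (Suc (Suc k)))
      (tens_lc O1 (Q (Suc i) (Suc k)) + - tens_lc E (Q (Suc (Suc i)) k) :: tm \<Rightarrow> 'k)"
    unfolding Q_SS neg[symmetric] by (rule eqv_add[OF s1 s2])
  then show ?thesis by simp
qed

lemma LI:
  assumes A: "lc b c A" and B: "lc b' c' B" and C: "lc a b C" and D: "lc a' b' D"
    and MN: "M = a + a'" "N = c + c'"
  shows "tl_eq M N (comp_lc (tens_lc A B) (tens_lc C D)) (tens_lc (comp_lc A C) (comp_lc B D) :: tm \<Rightarrow> 'k::field)"
proof -
  have h0: "tl_eq M N (single (CompT (TensT s1 s2) (TensT s3 s4)))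
      (single (TensT (CompT s1 s3) (CompT s2 s4)) :: tm \<Rightarrow> 'k)"
    if "typed s1 b c" "typed s2 b' c'" "typed s3 a b" "typed s4 a' b'" for s1 s2 s3 s4
    by (rule eqv_sym, rule g_inter[OF that(3) that(1) that(4) that(2) MN])
  have h1: "tl_eq M N (comp_lc (tens_lc (single s1) (single s2)) (tens_lc (single s3) D))
      (tens_lc (comp_lc (single s1) (single s3)) (comp_lc (single s2) D) :: tm \<Rightarrow> 'k)"
    if "typed s1 b c" "typed s2 b' c'" "typed s3 a b" for s1 s2 s3
    by (rule lift[OF D, where F = "\<lambda>x. comp_lc (tens_lc (single s1) (single s2)) (tens_lc (single s3) x)"
          and G = "\<lambda>x. tens_lc (comp_lc (single s1) (single s3)) (comp_lc (single s2) x)"])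
      (simp_all only: lin_simps h0 that)
  have h2: "tl_eq M N (comp_lc (tens_lc (single s1) (single s2)) (tens_lc C D))
      (tens_lc (comp_lc (single s1) C) (comp_lc (single s2) D) :: tm \<Rightarrow> 'k)"
    if "typed s1 b c" "typed s2 b' c'" for s1 s2
    by (rule lift[OF C, where F = "\<lambda>x. comp_lc (tens_lc (single s1) (single s2)) (tens_lc x D)"
          and G = "\<lambda>x. tens_lc (comp_lc (single s1) x) (comp_lc (single s2) D)"])
      (rule h1[OF that], assumption, (simp_all only: lin_simps))
  have h3: "tl_eq M N (comp_lc (tens_lc (single s1) B) (tens_lc C D))
      (tens_lc (comp_lc (single s1) C) (comp_lc B D) :: tm \<Rightarrow> 'k)"
    if "typed s1 b c" for s1
    by (rule lift[OF B, where F = "\<lambda>x. comp_lc (tens_lc (single s1) x) (tens_lc C D)"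
          and G = "\<lambda>x. tens_lc (comp_lc (single s1) C) (comp_lc x D)"])
      (rule h2[OF that], assumption, (simp_all only: lin_simps))
  show ?thesis
    by (rule lift[OF A, where F = "\<lambda>x. comp_lc (tens_lc x B) (tens_lc C D)"
          and G = "\<lambda>x. tens_lc (comp_lc x C) (comp_lc B D)"])
      (rule h3, assumption, (simp_all only: lin_simps))
qed

lemma null_lift:
  assumes "lc m n a" "\<And>s. typed s m n \<Longrightarrow> null p q (F (single s))"
    "\<And>x y. F (x + y) = F x + F y" "\<And>c x. F (sm c x) = sm c (F x)" "F 0 = 0"
  shows "null p q (F a)"
  using assms(1)
proof (induction rule: lc_induct)
  case zero then show ?case by (simp only: assms(5)) (rule null_0)
next
  case (single s) then show ?case by (rule assms(2))
next
  case (add x y) then show ?case by (simp only: assms(3)) (rule null_add)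
next
  case (sm c x) then show ?case by (simp only: assms(4)) (rule null_sm)
qed

lemma LZ1:
  assumes X: "lc p p' X" and Y: "lc b (Suc p) Y" and MN: "M = 2 + b" "N = 3 + p'"
  shows "null M N (comp_lc (tens_lc O1 (tens_lc E X)) (tens_lc E Y) :: tm \<Rightarrow> 'k::field)"
proof -
  have h0: "null M N (comp_lc (tens_lc O1 (tens_lc E (single s))) (tens_lc E (single t)) :: tm \<Rightarrow> 'k)"
    if "typed s p p'" "typed t b (Suc p)" for s t
    unfolding tens_single comp_single MN by (rule zz1[OF that])
  have h1: "null M N (comp_lc (tens_lc O1 (tens_lc E (single s))) (tens_lc E Y) :: tm \<Rightarrow> 'k)"
    if "typed s p p'" for s
    by (rule null_lift[OF Y, where F = "\<lambda>y. comp_lc (tens_lc O1 (tens_lc E (single s))) (tens_lc E y)"])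
      (rule h0[OF that], assumption, (simp_all only: lin_simps))
  show ?thesis
    by (rule null_lift[OF X, where F = "\<lambda>x. comp_lc (tens_lc O1 (tens_lc E x)) (tens_lc E Y)"])
      (rule h1, assumption, (simp_all only: lin_simps))
qed

lemma LZ2:
  assumes X: "lc p p' X" and Y: "lc (Suc p') q Y" and MN: "M = 3 + p" "N = 2 + q"
  shows "null M N (comp_lc (tens_lc E Y) (tens_lc O1 (tens_lc E X)) :: tm \<Rightarrow> 'k::field)"
proof -
  have h0: "null M N (comp_lc (tens_lc E (single t)) (tens_lc O1 (tens_lc E (single s))) :: tm \<Rightarrow> 'k)"
    if "typed s p p'" "typed t (Suc p') q" for s t
    unfolding tens_single comp_single MN by (rule zz2[OF that])
  have h1: "null M N (comp_lc (tens_lc E Y) (tens_lc O1 (tens_lc E (single s))) :: tm \<Rightarrow> 'k)"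
    if "typed s p p'" for s
    by (rule null_lift[OF Y, where F = "\<lambda>y. comp_lc (tens_lc E y) (tens_lc O1 (tens_lc E (single s)))"])
      (rule h0[OF that], assumption, (simp_all only: lin_simps))
  show ?thesis
    by (rule null_lift[OF X, where F = "\<lambda>x. comp_lc (tens_lc E Y) (tens_lc O1 (tens_lc E x))"])
      (rule h1, assumption, (simp_all only: lin_simps))
qed

lemma LA:
  assumes X: "lc m n X" and MN: "M = 2 + m" "N = 2 + n"
  shows "tl_eq M N (tens_lc O1 (tens_lc O1 X)) (tens_lc I2 X :: tm \<Rightarrow> 'k::field)"
proof -
  have h0: "tl_eq M N (tens_lc O1 (tens_lc O1 (single s))) (tens_lc I2 (single s) :: tm \<Rightarrow> 'k)"
    if s: "typed s m n" for s
  proof -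
    have "tl_eq M N (single (TensT (IdT 1) (TensT (IdT 1) s))) (single (TensT (TensT (IdT 1) (IdT 1)) s) :: tm \<Rightarrow> 'k)"
      by (rule eqv_sym, rule g_tassoc[where a=1 and b=1 and c=1 and d=1 and e=m and q=n]) (use s MN in auto)
    also have "tl_eq M N \<dots> (single (TensT (IdT 2) s))"
      by (rule t_tensR[where m=2 and n=2 and p=m and q=n], rule g_idtens) (use s MN in auto)
    finally show ?thesis unfolding tens_single .
  qed
  show ?thesis
    by (rule lift[OF X, where F = "\<lambda>x. tens_lc O1 (tens_lc O1 x)" and G = "\<lambda>x. tens_lc I2 x"])
      (rule h0, assumption, (simp_all only: lin_simps))
qed

lemma LIdl:
  assumes X: "lc m n X"
  shows "tl_eq m n (comp_lc (single (IdT n)) X) (X :: tm \<Rightarrow> 'k::field)"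
  by (rule lift[OF X, where F = "\<lambda>x. comp_lc (single (IdT n)) x" and G = "\<lambda>x. x"])
    (simp only: comp_single, rule g_idl, assumption, (simp_all only: lin_simps))

lemma LIdr:
  assumes X: "lc m n X"
  shows "tl_eq m n (comp_lc X (single (IdT m))) (X :: tm \<Rightarrow> 'k::field)"
  by (rule lift[OF X, where F = "\<lambda>x. comp_lc x (single (IdT m))" and G = "\<lambda>x. x"])
    (simp only: comp_single, rule g_idr, assumption, (simp_all only: lin_simps))

lemma OO: "tl_eq 1 1 (comp_lc O1 O1) (O1 :: tm \<Rightarrow> 'k::field)"
  unfolding comp_single by (rule g_idl) simp

lemma EE: "tl_eq 2 2 (comp_lc E E) (E :: tm \<Rightarrow> 'k::field)"
proof -
  have "tl_eq 2 2 (single (CompT (CompT CupT CapT) (CompT CupT CapT)))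
     (single (CompT CupT (CompT CapT (CompT CupT CapT))) :: tm \<Rightarrow> 'k)"
    by (rule eqv_sym, rule g_assoc[where m=2 and n=0]) auto
  also have "tl_eq 2 2 \<dots> (single (CompT CupT CapT))"
  proof (rule t_compL[where n=0])
    have "tl_eq 2 0 (single (CompT CapT (CompT CupT CapT))) (single (CompT (CompT CapT CupT) CapT) :: tm \<Rightarrow> 'k)"
      by (rule g_assoc[where m=0 and n=2]) auto
    also have "tl_eq 2 0 \<dots> (single (CompT (IdT 0) CapT))"
      by (rule t_compR, rule g_loop) auto
    also have "tl_eq 2 0 \<dots> (single CapT)"
      by (rule g_idl) auto
    finally show "tl_eq 2 0 (single (CompT CapT (CompT CupT CapT))) (single CapT :: tm \<Rightarrow> 'k)" .
  qed auto
  finally show ?thesis unfolding comp_single .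
qed

lemma I2E: "tl_eq 2 2 (comp_lc I2 E) (E :: tm \<Rightarrow> 'k::field)"
  unfolding comp_single by (rule g_idl) auto

lemma EI2: "tl_eq 2 2 (comp_lc E I2) (E :: tm \<Rightarrow> 'k::field)"
  unfolding comp_single by (rule g_idr) auto

section \<open>Idempotence\<close>

lemma lcO1: "lc 1 1 (O1 :: tm \<Rightarrow> 'k::field)" by (rule lc_single) simp
lemma lcE: "lc 2 2 (E :: tm \<Rightarrow> 'k::field)" by (rule lc_single) simp
lemma lcI2: "lc 2 2 (I2 :: tm \<Rightarrow> 'k::field)" by (rule lc_single) simp
lemma lcZ: "lc 0 0 (Z :: tm \<Rightarrow> 'k::field)" by (rule lc_single) simp

lemma Q_Z: "tl_eq 0 0 (Q i 0) (Z :: tm \<Rightarrow> 'k::field)"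
  unfolding Q_0 by (rule g_idl) simp

lemma Q_O: "tl_eq 1 1 (Q i (Suc 0)) (O1 :: tm \<Rightarrow> 'k::field)"
proof -
  have "tl_eq 1 1 (Q i (Suc 0)) (single (CompT (IdT 1) (IdT 1)) :: tm \<Rightarrow> 'k)"
    unfolding Q_1 by (rule t_comp2, rule g_unitr, simp, rule g_unitr) auto
  also have "tl_eq 1 1 \<dots> O1" by (rule g_idl) simp
  finally show ?thesis .
qed

lemma idem_id: "tl_eq n n X (single (IdT n)) \<Longrightarrow> lc n n X \<Longrightarrow> tl_eq n n (comp_lc X X) (X :: tm \<Rightarrow> 'k::field)"
proof -
  assume h: "tl_eq n n X (single (IdT n))" and l: "lc n n X"
  have "tl_eq n n (comp_lc X X) (comp_lc (single (IdT n)) (single (IdT n)))"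
    by (rule eqv_comp2[OF h h l]) (rule lc_single, simp)
  also have "tl_eq n n \<dots> (single (IdT n))" unfolding comp_single by (rule g_idl) simp
  also have "tl_eq n n \<dots> X" by (rule eqv_sym[OF h])
  finally show ?thesis .
qed

lemma K1:
  assumes IH: "\<And>i. tl_eq k k (comp_lc (Q i k) (Q i k)) (Q i k :: tm \<Rightarrow> 'k::field)"
  shows "tl_eq (Suc (Suc k)) (Suc (Suc k)) (comp_lc (tens_lc O1 (Q (Suc i) (Suc k))) (tens_lc E (Q (Suc (Suc i)) k)))
     (tens_lc E (Q (Suc (Suc i)) k) :: tm \<Rightarrow> 'k)"
proof (cases k)
  case 0
  have "tl_eq 2 2 (comp_lc (tens_lc O1 (Q (Suc i) (Suc 0))) (tens_lc E (Q (Suc (Suc i)) 0)))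
      (comp_lc (tens_lc O1 O1) (tens_lc E Z) :: tm \<Rightarrow> 'k)"
    by (rule eqv_comp2, rule eqv_tensL[OF Q_O lcO1], simp, simp, rule eqv_tensL[OF Q_Z lcE], simp, simp,
        rule lc_tens[OF lcO1 lc_Q], simp, simp, rule lc_tens[OF lcE lcZ]) simp_all
  also have "tl_eq 2 2 \<dots> (single (CompT (IdT 2) (TensT (CompT CupT CapT) (IdT 0))))"
    unfolding tens_single comp_single by (rule t_compR, rule g_idtens) auto
  also have "tl_eq 2 2 \<dots> (tens_lc E Z)"
    unfolding tens_single by (rule g_idl) auto
  also have "tl_eq 2 2 \<dots> (tens_lc E (Q (Suc (Suc i)) 0))"
    by (rule eqv_tensL[OF eqv_sym[OF Q_Z] lcE]) simp_all
  finally show ?thesis using 0 by (simp add: eval_nat_numeral)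
next
  case (Suc k')
  let ?Qb = "Q (Suc (Suc i)) k :: tm \<Rightarrow> 'k" and ?Qc = "Q (Suc (Suc (Suc i))) k' :: tm \<Rightarrow> 'k"
  have rec: "tl_eq (Suc k) (Suc k) (Q (Suc i) (Suc k)) (tens_lc O1 ?Qb - tens_lc E ?Qc)"
    using Q_rec[of k' "Suc i"] Suc by simp
  have lcb: "lc (Suc (Suc k)) (Suc (Suc k)) (tens_lc E ?Qb)" by (rule lc_tens[OF lcE lc_Q]) simp_all
  have "tl_eq (Suc (Suc k)) (Suc (Suc k)) (comp_lc (tens_lc O1 (Q (Suc i) (Suc k))) (tens_lc E ?Qb))
      (comp_lc (tens_lc O1 (tens_lc O1 ?Qb - tens_lc E ?Qc)) (tens_lc E ?Qb))"
    by (rule eqv_compR[OF _ lcb], rule eqv_tensL[OF rec lcO1]) simp_all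
  also have "\<dots> = comp_lc (tens_lc O1 (tens_lc O1 ?Qb)) (tens_lc E ?Qb) - comp_lc (tens_lc O1 (tens_lc E ?Qc)) (tens_lc E ?Qb)"
    by (simp only: tens_lc_diff2 comp_lc_diff1)
  also have "tl_eq (Suc (Suc k)) (Suc (Suc k)) \<dots> (tens_lc E ?Qb - 0)"
  proof (rule eqv_diff)
    have "tl_eq (Suc (Suc k)) (Suc (Suc k)) (comp_lc (tens_lc O1 (tens_lc O1 ?Qb)) (tens_lc E ?Qb))
        (comp_lc (tens_lc I2 ?Qb) (tens_lc E ?Qb))"
      by (rule eqv_compR[OF LA[OF lc_Q] lcb]) simp_all
    also have "tl_eq (Suc (Suc k)) (Suc (Suc k)) \<dots> (tens_lc (comp_lc I2 E) (comp_lc ?Qb ?Qb))"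
      by (rule LI[OF lcI2 lc_Q lcE lc_Q]) simp_all
    also have "tl_eq (Suc (Suc k)) (Suc (Suc k)) \<dots> (tens_lc E ?Qb)"
      by (rule eqv_tens2[OF I2E IH], rule lc_comp[OF lcI2 lcE], rule lc_Q) simp_all
    finally show "tl_eq (Suc (Suc k)) (Suc (Suc k)) (comp_lc (tens_lc O1 (tens_lc O1 ?Qb)) (tens_lc E ?Qb))
        (tens_lc E ?Qb)" .
    show "tl_eq (Suc (Suc k)) (Suc (Suc k)) (comp_lc (tens_lc O1 (tens_lc E ?Qc)) (tens_lc E ?Qb)) 0"
      by (rule null_eqv0, rule LZ1[OF lc_Q, where b = k]) (use Suc lc_Q in auto)
  qed
  finally show ?thesis by simp
qed

lemma K2:
  assumes IH: "\<And>i. tl_eq k k (comp_lc (Q i k) (Q i k)) (Q i k :: tm \<Rightarrow> 'k::field)"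
  shows "tl_eq (Suc (Suc k)) (Suc (Suc k)) (comp_lc (tens_lc E (Q (Suc (Suc i)) k)) (tens_lc O1 (Q (Suc i) (Suc k))))
     (tens_lc E (Q (Suc (Suc i)) k) :: tm \<Rightarrow> 'k)"
proof (cases k)
  case 0
  have "tl_eq 2 2 (comp_lc (tens_lc E (Q (Suc (Suc i)) 0)) (tens_lc O1 (Q (Suc i) (Suc 0))))
      (comp_lc (tens_lc E Z) (tens_lc O1 O1) :: tm \<Rightarrow> 'k)"
    by (rule eqv_comp2, rule eqv_tensL[OF Q_Z lcE], simp, simp, rule eqv_tensL[OF Q_O lcO1], simp, simp,
        rule lc_tens[OF lcE lc_Q], simp, simp, rule lc_tens[OF lcO1 lcO1]) simp_all
  also have "tl_eq 2 2 \<dots> (single (CompT (TensT (CompT CupT CapT) (IdT 0)) (IdT 2)))"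
    unfolding tens_single comp_single by (rule t_compL, rule g_idtens) auto
  also have "tl_eq 2 2 \<dots> (tens_lc E Z)"
    unfolding tens_single by (rule g_idr) auto
  also have "tl_eq 2 2 \<dots> (tens_lc E (Q (Suc (Suc i)) 0))"
    by (rule eqv_tensL[OF eqv_sym[OF Q_Z] lcE]) simp_all
  finally show ?thesis using 0 by (simp add: eval_nat_numeral)
next
  case (Suc k')
  let ?Qb = "Q (Suc (Suc i)) k :: tm \<Rightarrow> 'k" and ?Qc = "Q (Suc (Suc (Suc i))) k' :: tm \<Rightarrow> 'k"
  have rec: "tl_eq (Suc k) (Suc k) (Q (Suc i) (Suc k)) (tens_lc O1 ?Qb - tens_lc E ?Qc)"
    using Q_rec[of k' "Suc i"] Suc by simp
  have lcb: "lc (Suc (Suc k)) (Suc (Suc k)) (tens_lc E ?Qb)" by (rule lc_tens[OF lcE lc_Q]) simp_all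
  have "tl_eq (Suc (Suc k)) (Suc (Suc k)) (comp_lc (tens_lc E ?Qb) (tens_lc O1 (Q (Suc i) (Suc k))))
      (comp_lc (tens_lc E ?Qb) (tens_lc O1 (tens_lc O1 ?Qb - tens_lc E ?Qc)))"
    by (rule eqv_compL[OF _ lcb], rule eqv_tensL[OF rec lcO1]) simp_all
  also have "\<dots> = comp_lc (tens_lc E ?Qb) (tens_lc O1 (tens_lc O1 ?Qb)) - comp_lc (tens_lc E ?Qb) (tens_lc O1 (tens_lc E ?Qc))"
    by (simp only: tens_lc_diff2 comp_lc_diff2)
  also have "tl_eq (Suc (Suc k)) (Suc (Suc k)) \<dots> (tens_lc E ?Qb - 0)"
  proof (rule eqv_diff)
    have "tl_eq (Suc (Suc k)) (Suc (Suc k)) (comp_lc (tens_lc E ?Qb) (tens_lc O1 (tens_lc O1 ?Qb)))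
        (comp_lc (tens_lc E ?Qb) (tens_lc I2 ?Qb))"
      by (rule eqv_compL[OF LA[OF lc_Q] lcb]) simp_all
    also have "tl_eq (Suc (Suc k)) (Suc (Suc k)) \<dots> (tens_lc (comp_lc E I2) (comp_lc ?Qb ?Qb))"
      by (rule LI[OF lcE lc_Q lcI2 lc_Q]) simp_all
    also have "tl_eq (Suc (Suc k)) (Suc (Suc k)) \<dots> (tens_lc E ?Qb)"
      by (rule eqv_tens2[OF EI2 IH], rule lc_comp[OF lcE lcI2], rule lc_Q) simp_all
    finally show "tl_eq (Suc (Suc k)) (Suc (Suc k)) (comp_lc (tens_lc E ?Qb) (tens_lc O1 (tens_lc O1 ?Qb)))
        (tens_lc E ?Qb)" .
    show "tl_eq (Suc (Suc k)) (Suc (Suc k)) (comp_lc (tens_lc E ?Qb) (tens_lc O1 (tens_lc E ?Qc))) 0"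
      by (rule null_eqv0, rule LZ2[OF lc_Q, where q = k]) (use Suc lc_Q in auto)
  qed
  finally show ?thesis by simp
qed

lemma Q_idem: "tl_eq k k (comp_lc (Q i k) (Q i k)) (Q i k :: tm \<Rightarrow> 'k::field)"
proof (induction k arbitrary: i rule: less_induct)
  case (less k)
  show ?case
  proof (cases k)
    case 0 then show ?thesis by (simp only:) (rule idem_id[OF Q_Z lc_Q])
  next
    case (Suc k1)
    show ?thesis
    proof (cases k1)
      case 0
      have k: "k = Suc 0" using Suc 0 by simp
      have l: "lc 1 1 (Q i (Suc 0) :: tm \<Rightarrow> 'k)" using lc_Q[of "Suc 0" i] by simp
      show ?thesis using idem_id[OF Q_O l] k by simp
    next
      case (Suc k2)
      have k: "k = Suc (Suc k2)" using Suc \<open>k = Suc k1\<close> by simp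
      have IH1: "\<And>i. tl_eq (Suc k2) (Suc k2) (comp_lc (Q i (Suc k2)) (Q i (Suc k2))) (Q i (Suc k2) :: tm \<Rightarrow> 'k)"
        by (rule less) (simp add: k)
      have IH0: "\<And>i. tl_eq k2 k2 (comp_lc (Q i k2) (Q i k2)) (Q i k2 :: tm \<Rightarrow> 'k)"
        by (rule less) (simp add: k)
      let ?K = "Suc (Suc k2)"
      let ?Qa = "Q (Suc i) (Suc k2) :: tm \<Rightarrow> 'k" and ?Qb = "Q (Suc (Suc i)) k2 :: tm \<Rightarrow> 'k"
      let ?A = "tens_lc O1 ?Qa" and ?B = "tens_lc E ?Qb"
      have R: "tl_eq ?K ?K (Q i ?K) (?A - ?B)" by (rule Q_rec)
      have lA: "lc ?K ?K ?A" by (rule lc_tens[OF lcO1 lc_Q]) simp_all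
      have lB: "lc ?K ?K ?B" by (rule lc_tens[OF lcE lc_Q]) simp_all
      have lT: "lc ?K ?K (?A - ?B)" by (rule lc_diff[OF lA lB])
      have "tl_eq ?K ?K (comp_lc (Q i ?K) (Q i ?K)) (comp_lc (?A - ?B) (?A - ?B))"
        by (rule eqv_comp2[OF R R lc_Q lT])
      also have "comp_lc (?A - ?B) (?A - ?B) = comp_lc ?A ?A - comp_lc ?B ?A - (comp_lc ?A ?B - comp_lc ?B ?B)"
        by (simp only: comp_lc_diff1 comp_lc_diff2)
      also have "tl_eq ?K ?K \<dots> (?A - ?B - (?B - ?B))"
      proof (intro eqv_diff)
        have "tl_eq ?K ?K (comp_lc ?A ?A) (tens_lc (comp_lc O1 O1) (comp_lc ?Qa ?Qa))"
          by (rule LI[OF lcO1 lc_Q lcO1 lc_Q]) simp_all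
        also have "tl_eq ?K ?K \<dots> ?A"
          by (rule eqv_tens2[OF OO IH1], rule lc_comp[OF lcO1 lcO1], rule lc_Q) simp_all
        finally show "tl_eq ?K ?K (comp_lc ?A ?A) ?A" .
        show "tl_eq ?K ?K (comp_lc ?A ?B) ?B" by (rule K1[OF IH0])
        show "tl_eq ?K ?K (comp_lc ?B ?A) ?B" by (rule K2[OF IH0])
        have "tl_eq ?K ?K (comp_lc ?B ?B) (tens_lc (comp_lc E E) (comp_lc ?Qb ?Qb))"
          by (rule LI[OF lcE lc_Q lcE lc_Q]) simp_all
        also have "tl_eq ?K ?K \<dots> ?B"
          by (rule eqv_tens2[OF EE IH0], rule lc_comp[OF lcE lcE], rule lc_Q) simp_all
        finally show "tl_eq ?K ?K (comp_lc ?B ?B) ?B" .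
      qed
      also have "?A - ?B - (?B - ?B) = ?A - ?B" by (simp add: fun_eq_iff)
      also have "tl_eq ?K ?K \<dots> (Q i ?K)" by (rule eqv_sym[OF R])
      finally show ?thesis unfolding k .
    qed
  qed
qed

lemma apt_adm: "{I. apt n I} = adm 1 n"
proof (rule set_eqI, rule iffI)
  fix I assume "I \<in> {I. apt n I}"
  then have a: "I \<subseteq> {1..n}" "n \<notin> I" "\<forall>i\<in>I. i - 1 \<notin> I \<and> i + 1 \<notin> I" by (auto simp: apt_def)
  have "I \<subseteq> {1..<1 + n - 1}"
  proof
    fix x assume "x \<in> I"
    then have "1 \<le> x" "x \<le> n" "x \<noteq> n" using a by auto
    then show "x \<in> {1..<1 + n - 1}" by simp
  qed
  moreover have "\<forall>j\<in>I. Suc j \<notin> I" using a(3) by simp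
  ultimately show "I \<in> adm 1 n" by (simp add: adm_def)
next
  fix I assume "I \<in> adm 1 n"
  then have a: "I \<subseteq> {1..<n}" "\<forall>j\<in>I. Suc j \<notin> I" by (auto simp: adm_def)
  have "\<forall>i\<in>I. i - 1 \<notin> I"
  proof
    fix i assume i: "i \<in> I"
    then have "i \<ge> 1" using a by auto
    show "i - 1 \<notin> I"
    proof
      assume "i - 1 \<in> I"
      then have "Suc (i - 1) \<notin> I" using a by auto
      then show False using i \<open>i \<ge> 1\<close> by simp
    qed
  qed
  moreover have "I \<subseteq> {1..n}" "n \<notin> I" using a(1) by auto
  ultimately show "I \<in> {I. apt n I}" using a unfolding apt_def by auto
qed

lemma jw_Q: "jw n = Q 1 n"
proof (rule ext)
  fix t
  show "jw n t = Q 1 n t"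
    unfolding jw_def Q_def cap_I_def cup_I_def apt_adm sum_fun_apply' sm_apply ..
qed

theorem mainTheorem5:
  fixes n :: nat
  shows "tl_eq n n (comp_lc (jw n) (jw n)) (jw n :: tm \<Rightarrow> 'k::field)"
  unfolding jw_Q by (rule Q_idem)

end
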